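(* Let $C_{\mathcal L}(\mathbb T^2):=\mathcal L^\infty_{-,-}(\mathbb T^2)\cap C(\mathbb T^2)$ and let $\varphi\in C(\mathbb T^2)$. Then $$\operatorname{dist}_{L^\infty}(\varphi,\mathcal L^\infty_{-,-})=\operatorname{dist}_{L^\infty}(\varphi,C_{\mathcal L}).$$
   Context: $H^2_{-,-}$ consists of $f\in L^2(\mathbb T^2)$ whose Fourier coefficients $\hat f(n_1,n_2)$ vanish unless $n_1<0,n_2<0$, and $\mathbb P_{-,-}$ is the orthogonal projection onto it. $\mathcal L^\infty_{-,-}(\mathbb T^2)$ is the space of $b\in L^\infty(\mathbb T^2)$ with $\mathbb P_{-,-}b=0$. *)

theory Defs
  imports "HOL-Analysis.Analysis" "HOL-Probability.Essential_Supremum"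
begin

text \<open>The torus T^2 is identified with the fundamental square [0,1]^2 (coordinates t, with
  the point (e^{2 pi i t1}, e^{2 pi i t2})), carrying normalized Lebesgue measure.\<close>

definition T2sq :: "(real \<times> real) set" where
  "T2sq = cbox (0,0) (1,1)"

definition T2meas :: "(real \<times> real) measure" where
  "T2meas = lebesgue_on T2sq"

definition Linf_norm :: "(real \<times> real \<Rightarrow> complex) \<Rightarrow> ereal" where
  "Linf_norm f = esssup T2meas (\<lambda>z. ereal (cmod (f z)))"

definition Linf :: "(real \<times> real \<Rightarrow> complex) set" where
  "Linf = {f. f \<in> borel_measurable T2meas \<and> Linf_norm f < \<infinity>}"

definition fourier2 :: "(real \<times> real \<Rightarrow> complex) \<Rightarrow> int \<Rightarrow> int \<Rightarrow> complex" where
  "fourier2 f n1 n2 =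
     integral\<^sup>L T2meas (\<lambda>z. f z * cis (- 2 * pi * (of_int n1 * fst z + of_int n2 * snd z)))"

definition Linf_mm :: "(real \<times> real \<Rightarrow> complex) set" where
  "Linf_mm = {b \<in> Linf. \<forall>n1 n2. n1 < 0 \<longrightarrow> n2 < 0 \<longrightarrow> fourier2 b n1 n2 = 0}"

definition CT2 :: "(real \<times> real \<Rightarrow> complex) set" where
  "CT2 = {f. continuous_on UNIV f \<and> (\<forall>x y. f (x + 1, y) = f (x, y) \<and> f (x, y + 1) = f (x, y))}"

definition C_L :: "(real \<times> real \<Rightarrow> complex) set" where
  "C_L = Linf_mm \<inter> CT2"

definition dist_Linf :: "(real \<times> real \<Rightarrow> complex) \<Rightarrow> (real \<times> real \<Rightarrow> complex) set \<Rightarrow> ereal" where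
  "dist_Linf f S = (INF b\<in>S. Linf_norm (\<lambda>z. f z - b z))"

end

theory Submission
  imports Defs
begin


definition E :: "int \<times> int \<Rightarrow> real \<times> real \<Rightarrow> complex" where
  "E m t = cis (2*pi*(of_int (fst m) * fst t + of_int (snd m) * snd t))"

lemma int1: "integral {0..1} (\<lambda>y. cis (2*pi* of_int k*y)) = (if k = 0 then 1 else 0)"
proof (cases "k = 0")
  case True then show ?thesis by simp
next
  case False
  have "integral {0..1} (\<lambda>y. cis (2*pi* of_int k*y)) = integral {0..1} (\<lambda>t. exp((\<i>*(2*pi* of_int k)) * complex_of_real t))"
    by (simp add: cis_conv_exp mult.commute mult.left_commute)
  also have "\<dots> = (exp((\<i>*(2*pi* of_int k)) * of_real 1) - 1) / (\<i>*(2*pi* of_int k))"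
    by (rule integral_exp) (use False in auto)
  also have "exp((\<i>*(2*pi* of_int k)) * of_real 1) = cis (2*pi* of_int k)"
    by (simp add: cis_conv_exp mult.commute mult.left_commute)
  also have "\<dots> = 1" by (simp add: cis_multiple_2pi)
  finally show ?thesis using False by simp
qed

lemma E_split: "E m (x,y) = cis (2*pi* of_int (fst m)*x) * cis (2*pi* of_int (snd m)*y)"
  by (simp add: E_def cis_mult algebra_simps)

lemma continuous_E[continuous_intros]: "continuous_on S (E m)"
  unfolding E_def by (intro continuous_intros)

lemma T2meas_space[simp]: "space T2meas = T2sq"
  by (simp add: T2meas_def)

lemma T2sq_sets: "T2sq \<in> sets lebesgue"
  by (simp add: T2sq_def)

lemma cont_integrable: "continuous_on T2sq (f::_\<Rightarrow>complex) \<Longrightarrow> integrable T2meas f"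
  unfolding T2meas_def T2sq_def by (rule continuous_imp_integrable)

lemma cont_integral: "continuous_on T2sq (f::_\<Rightarrow>complex) \<Longrightarrow> integral\<^sup>L T2meas f = integral T2sq f"
  by (simp add: T2meas_def T2sq_sets cont_integrable[unfolded T2meas_def] lebesgue_integral_eq_integral)

lemma ortho: "integral\<^sup>L T2meas (E m) = (if m = 0 then 1 else 0)"
proof -
  have "integral\<^sup>L T2meas (E m) = integral (cbox (0,0) (1,1)) (E m)"
    by (simp add: cont_integral continuous_E T2sq_def)
  also have "\<dots> = integral (cbox 0 1) (\<lambda>x. integral (cbox 0 1) (\<lambda>y. E m (x,y)))"
    by (rule integral_prod_continuous) (intro continuous_intros)
  also have "\<dots> = integral {0..1} (\<lambda>x. cis (2*pi* of_int (fst m)*x) * integral {0..1} (\<lambda>y. cis (2*pi* of_int (snd m)*y)))"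
    by (simp add: E_split cbox_interval)
  also have "\<dots> = integral {0..1} (\<lambda>x. cis (2*pi* of_int (fst m)*x)) * integral {0..1} (\<lambda>y. cis (2*pi* of_int (snd m)*y))"
    by (simp add: integral_mult_left)
  also have "\<dots> = (if m = 0 then 1 else 0)"
    by (simp add: int1 prod_eq_iff)
  finally show ?thesis .
qed

lemma E_zero[simp]: "E 0 t = 1" by (simp add: E_def)
lemma E_add: "E (a + b) t = E a t * E b t"
  by (simp add: E_def cis_mult algebra_simps)
lemma E_minus: "E (- a) t = cnj (E a t)"
  unfolding E_def cis_cnj by (rule arg_cong[where f=cis]) (simp add: algebra_simps)
lemma E_diff_arg: "E m (x - t) = E m x * E (- m) t"
  by (simp add: E_def cis_mult algebra_simps)
lemma norm_E[simp]: "cmod (E m t) = 1" by (simp add: E_def)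
lemma E_cnj_mult: "E a t * cnj (E a t) = 1"
  by (metis complex_norm_square norm_E of_real_1 power_one)
lemma E_diff: "E (p - q) t = E p t * cnj (E q t)"
  using E_add[of p "-q" t] by (simp add: E_minus)

lemma meas_T2: "measure T2meas T2sq = 1"
proof -
  have "E 0 = (\<lambda>t. 1)" by (rule ext) simp
  then have "integral\<^sup>L T2meas (\<lambda>t. 1::complex) = 1" using ortho[of 0] by simp
  then show ?thesis by (simp add: scaleR_conv_of_real)
qed

lemma emeas_T2: "emeasure T2meas (space T2meas) \<noteq> 0"
  using meas_T2 by (metis T2meas_space measure_def zero_neq_one enn2real_0)

lemma fin_T2: "finite_measure T2meas"
  unfolding T2meas_def T2sq_def by (rule finite_measure_lebesgue_on) simp

lemma cont_meas: "continuous_on T2sq f \<Longrightarrow> f \<in> borel_measurable T2meas"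
  unfolding T2meas_def by (rule continuous_imp_measurable_on_sets_lebesgue) (simp_all add: T2sq_sets)

lemma bdd_integrable: "(f::_\<Rightarrow>complex) \<in> borel_measurable T2meas \<Longrightarrow> AE t in T2meas. cmod (f t) \<le> B \<Longrightarrow> integrable T2meas f"
  using finite_measure.integrable_const_bound[OF fin_T2] by blast

lemma Linf_bound: assumes "b \<in> Linf" shows "\<exists>B. AE t in T2meas. cmod (b t) \<le> B"
proof -
  have ae: "AE t in T2meas. ereal (cmod (b t)) \<le> Linf_norm b"
    unfolding Linf_norm_def by (rule esssup_AE)
  from assms have fin: "Linf_norm b < \<infinity>" by (simp add: Linf_def)
  show ?thesis
  proof (cases "Linf_norm b")
    case (real r) then show ?thesis using ae by (intro exI[of _ r]) auto
  next
    case PInf then show ?thesis using fin by simp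
  next
    case MInf then show ?thesis using ae by (intro exI[of _ 0]) auto
  qed
qed

lemma Linf_meas: "b \<in> Linf \<Longrightarrow> b \<in> borel_measurable T2meas"
  by (simp add: Linf_def)

lemma fourier2_E: "fourier2 b n1 n2 = integral\<^sup>L T2meas (\<lambda>t. b t * E (-n1, -n2) t)"
  unfolding fourier2_def E_def by (simp add: algebra_simps)

definition G :: "(int \<times> int) set \<Rightarrow> real \<times> real \<Rightarrow> complex" where
  "G P s = (\<Sum>p\<in>P. E p s)"

definition KP :: "(int \<times> int) set \<Rightarrow> real \<times> real \<Rightarrow> complex" where
  "KP P s = (\<Sum>p\<in>P. \<Sum>q\<in>P. E (p - q) s)"

lemma KP_norm: "KP P s = of_real ((cmod (G P s))^2)"
proof -
  have "of_real ((cmod (G P s))^2) = G P s * cnj (G P s)"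
    by (metis complex_norm_square of_real_power)
  also have "\<dots> = (\<Sum>p\<in>P. \<Sum>q\<in>P. E p s * cnj (E q s))"
    by (simp add: G_def sum_product)
  finally show ?thesis by (simp add: KP_def E_diff)
qed

lemma conv_KP:
  assumes "g \<in> borel_measurable T2meas" "AE t in T2meas. cmod (g t) \<le> B"
  shows "integral\<^sup>L T2meas (\<lambda>t. g t * KP P (x - t)) =
     (\<Sum>p\<in>P. \<Sum>q\<in>P. E (p - q) x * integral\<^sup>L T2meas (\<lambda>t. g t * E (q - p) t))"
proof -
  have int: "integrable T2meas (\<lambda>t. g t * E m t)" for m
  proof (rule bdd_integrable)
    show "(\<lambda>t. g t * E m t) \<in> borel_measurable T2meas"
      using assms(1) cont_meas[OF continuous_E] by measurable
    show "AE t in T2meas. cmod (g t * E m t) \<le> B"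
      using assms(2) by eventually_elim (simp add: norm_mult)
  qed
  have "(\<lambda>t. g t * KP P (x - t)) = (\<lambda>t. \<Sum>p\<in>P. \<Sum>q\<in>P. E (p - q) x * (g t * E (q - p) t))"
    by (auto simp: KP_def E_diff_arg sum_distrib_left intro!: sum.cong)
  then show ?thesis
    by (simp add: integral_sum int integrable_sum)
qed

lemma int_KP: assumes "finite P"
  shows "integral\<^sup>L T2meas (\<lambda>t. KP P (x - t)) = of_nat (card P)"
proof -
  have "integral\<^sup>L T2meas (\<lambda>t. 1 * KP P (x - t)) = (\<Sum>p\<in>P. \<Sum>q\<in>P. E (p - q) x * integral\<^sup>L T2meas (\<lambda>t. 1 * E (q - p) t))"
    by (rule conv_KP[where B=1]) auto
  also have "\<dots> = (\<Sum>p\<in>P. \<Sum>q\<in>P. if q = p then 1 else 0)"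
    by (intro sum.cong refl) (auto simp: ortho)
  also have "\<dots> = of_nat (card P)"
    using assms by simp
  finally show ?thesis by simp
qed

definition A :: "nat \<Rightarrow> int set" where "A N = int ` {..<N}"
definition Sq :: "nat \<Rightarrow> (int \<times> int) set" where "Sq N = A N \<times> A N"
definition P1 :: "nat \<Rightarrow> (int \<times> int) set" where "P1 N = A N \<times> {0}"
definition P2 :: "nat \<Rightarrow> (int \<times> int) set" where "P2 N = {0} \<times> A N"

lemma fin_A[simp]: "finite (A N)" "finite (Sq N)" "finite (P1 N)" "finite (P2 N)"
  by (auto simp: A_def Sq_def P1_def P2_def)

lemma card_A: "card (A N) = N"
  by (simp add: A_def card_image)

lemma card_P[simp]: "card (Sq N) = N * N" "card (P1 N) = N" "card (P2 N) = N"
  by (auto simp: Sq_def P1_def P2_def card_A card_cartesian_product)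

lemma sum_A: "(\<Sum>j\<in>A N. f j) = (\<Sum>i<N. f (int i))"
  by (simp add: A_def sum.reindex)

lemma sum_P1: "(\<Sum>p\<in>P1 N. f p) = (\<Sum>j\<in>A N. f (j,0))"
proof -
  have "P1 N = (\<lambda>j. (j,0)) ` A N" by (auto simp: P1_def)
  then show ?thesis by (simp add: sum.reindex inj_on_def)
qed

lemma sum_P2: "(\<Sum>p\<in>P2 N. f p) = (\<Sum>j\<in>A N. f (0,j))"
proof -
  have "P2 N = (\<lambda>j. (0,j)) ` A N" by (auto simp: P2_def)
  then show ?thesis by (simp add: sum.reindex inj_on_def)
qed

lemma G_Sq: "G (Sq N) s = G (P1 N) s * G (P2 N) s"
proof -
  have "G (Sq N) s = (\<Sum>j\<in>A N. \<Sum>l\<in>A N. E (j,l) s)"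
    by (simp add: G_def Sq_def sum.cartesian_product)
  also have "\<dots> = (\<Sum>j\<in>A N. \<Sum>l\<in>A N. E (j,0) s * E (0,l) s)"
    by (intro sum.cong refl) (metis E_add add_0 add_0_right add_Pair)
  also have "\<dots> = (\<Sum>j\<in>A N. E (j,0) s) * (\<Sum>l\<in>A N. E (0,l) s)"
    by (simp add: sum_product)
  also have "\<dots> = G (P1 N) s * G (P2 N) s"
    by (simp add: G_def sum_P1 sum_P2)
  finally show ?thesis .
qed

lemma E_pow1: "E (int i, 0) s = cis (2*pi * fst s) ^ i"
  unfolding Complex.DeMoivre E_def by (rule arg_cong[where f=cis]) simp

lemma E_pow2: "E (0, int i) s = cis (2*pi * snd s) ^ i"
  unfolding Complex.DeMoivre E_def by (rule arg_cong[where f=cis]) simp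

lemma G_P1: "G (P1 N) s = (\<Sum>i<N. cis (2*pi * fst s) ^ i)"
  unfolding G_def sum_P1 sum_A E_pow1 ..

lemma G_P2: "G (P2 N) s = (\<Sum>i<N. cis (2*pi * snd s) ^ i)"
  unfolding G_def sum_P2 sum_A E_pow2 ..

lemma geo_le_N: "cmod z = 1 \<Longrightarrow> cmod (\<Sum>i<N. z ^ i) \<le> N"
proof -
  assume z: "cmod z = 1"
  have "cmod (\<Sum>i<N. z ^ i) \<le> (\<Sum>i<N. cmod (z ^ i))" by (rule norm_sum)
  also have "\<dots> = N" using z by (simp add: norm_power)
  finally show ?thesis .
qed

lemma geo_le: assumes z: "cmod z = 1" "z \<noteq> 1"
  shows "cmod (\<Sum>i<N. z ^ i) \<le> 2 / cmod (z - 1)"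
proof -
  have "(\<Sum>i<N. z ^ i) = (1 - z^N) / (1 - z)" using z by (simp add: sum_gp_strict)
  then have "cmod (\<Sum>i<N. z ^ i) = cmod (1 - z^N) / cmod (z - 1)"
    by (simp add: norm_divide norm_minus_commute)
  also have "cmod (1 - z^N) \<le> 2"
    using norm_triangle_ineq4[of 1 "z^N"] z by (simp add: norm_power)
  then have "cmod (1 - z^N) / cmod (z - 1) \<le> 2 / cmod (z - 1)"
    by (simp add: divide_right_mono)
  finally show ?thesis .
qed

lemma continuous_G[continuous_intros]: "continuous_on S f \<Longrightarrow> continuous_on S (\<lambda>t. G P (f t))"
  unfolding G_def E_def by (intro continuous_intros)

lemma continuous_KP[continuous_intros]: "continuous_on S f \<Longrightarrow> continuous_on S (\<lambda>t. KP P (f t))"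
  unfolding KP_def E_def by (intro continuous_intros)

lemma int_G2: assumes "finite P"
  shows "integral\<^sup>L T2meas (\<lambda>t. (cmod (G P (x - t)))^2) = real (card P)"
proof -
  have "complex_of_real (integral\<^sup>L T2meas (\<lambda>t. (cmod (G P (x - t)))^2)) = integral\<^sup>L T2meas (\<lambda>t. KP P (x - t))"
    unfolding KP_norm by (rule integral_complex_of_real[symmetric])
  also have "\<dots> = of_nat (card P)" by (rule int_KP[OF assms])
  finally show ?thesis by (metis of_real_eq_iff of_real_of_nat_eq)
qed

lemma integrable_G2: "integrable T2meas (\<lambda>t. (cmod (G P (x - t)))^2)"
  unfolding T2meas_def T2sq_def by (rule continuous_imp_integrable) (intro continuous_intros)

definition far :: "real \<Rightarrow> real \<Rightarrow> bool" where
  "far d r \<longleftrightarrow> d \<le> frac r \<and> frac r \<le> 1 - d"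

lemma cis_frac: "cis (2*pi * r) = cis (2*pi * frac r)"
proof -
  have "cis (2*pi * r) = cis (2*pi * frac r + 2*pi* of_int (floor r))"
    by (simp add: frac_def algebra_simps)
  also have "\<dots> = cis (2*pi * frac r)"
    by (simp add: cis_mult[symmetric])
  finally show ?thesis .
qed

lemma far_bound: assumes "0 < d" "d \<le> 1/2"
  shows "\<exists>eta>0. \<forall>r. far d r \<longrightarrow> eta \<le> cmod (cis (2*pi * r) - 1)"
proof -
  have "\<exists>r0\<in>{d..1-d}. \<forall>r\<in>{d..1-d}. cmod (cis (2*pi * r0) - 1) \<le> cmod (cis (2*pi * r) - 1)"
    by (rule continuous_attains_inf) (use assms in \<open>auto intro!: continuous_intros\<close>)
  then obtain r0 where r0: "r0 \<in> {d..1-d}" and min: "\<And>r. r \<in> {d..1-d} \<Longrightarrow> cmod (cis (2*pi * r0) - 1) \<le> cmod (cis (2*pi * r) - 1)"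
    by blast
  have "cis (2*pi * r0) \<noteq> 1"
  proof
    assume "cis (2*pi * r0) = 1"
    then have "cos (2*pi * r0) = 1" using cis.sel(1)[of "2*pi * r0"] by simp
    then obtain n::int where "2*pi * r0 = of_int n * 2 * pi" by (auto simp: cos_one_2pi_int)
    then have "r0 = of_int n" by simp
    moreover have "0 < r0" "r0 < 1" using r0 assms by auto
    ultimately have "0 < n" "n < 1" by simp_all
    then show False by simp
  qed
  then have pos: "0 < cmod (cis (2*pi * r0) - 1)" by simp
  show ?thesis
  proof (intro exI[of _ "cmod (cis (2*pi * r0) - 1)"] conjI allI impI pos)
    fix r assume "far d r"
    then have "frac r \<in> {d..1-d}" by (simp add: far_def)
    then show "cmod (cis (2*pi * r0) - 1) \<le> cmod (cis (2*pi * r) - 1)"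
      using min cis_frac by metis
  qed
qed

lemma not_far: assumes "\<not> far d r" "d \<le> 1"
  shows "\<exists>k::int. \<bar>r - of_int k\<bar> < d"
proof (cases "frac r < d")
  case True
  then show ?thesis using frac_ge_0[of r] by (intro exI[of _ "floor r"]) (simp add: frac_def)
next
  case False
  then have "frac r > 1 - d" using assms by (auto simp: far_def)
  then show ?thesis using frac_lt_1[of r] by (intro exI[of _ "floor r + 1"]) (simp add: frac_def)
qed

lemma per1_nat: assumes "\<phi> \<in> CT2" shows "\<phi> (x + real n, y) = \<phi> (x, y)"
proof (induction n arbitrary: x)
  case (Suc n)
  have "\<phi> (x + real (Suc n), y) = \<phi> ((x + real n) + 1, y)" by (simp add: algebra_simps)
  also have "\<dots> = \<phi> (x + real n, y)" using assms by (simp add: CT2_def)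
  finally show ?case using Suc by simp
qed simp

lemma per2_nat: assumes "\<phi> \<in> CT2" shows "\<phi> (x, y + real n) = \<phi> (x, y)"
proof (induction n arbitrary: y)
  case (Suc n)
  have "\<phi> (x, y + real (Suc n)) = \<phi> (x, (y + real n) + 1)" by (simp add: algebra_simps)
  also have "\<dots> = \<phi> (x, y + real n)" using assms by (simp add: CT2_def)
  finally show ?case using Suc by simp
qed simp

lemma per1: assumes "\<phi> \<in> CT2" shows "\<phi> (x + of_int k, y) = \<phi> (x, y)"
proof (cases "k \<ge> 0")
  case True
  then obtain n where "k = int n" by (metis nonneg_eq_int)
  then show ?thesis using per1_nat[OF assms] by simp
next
  case False
  then obtain n where k: "k = - int n" by (metis neg_0_le_iff_le nonneg_eq_int le_cases minus_minus)
  have "\<phi> (x, y) = \<phi> ((x - real n) + real n, y)" by simp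
  also have "\<dots> = \<phi> (x - real n, y)" by (rule per1_nat[OF assms])
  finally show ?thesis using k by simp
qed

lemma per2: assumes "\<phi> \<in> CT2" shows "\<phi> (x, y + of_int k) = \<phi> (x, y)"
proof (cases "k \<ge> 0")
  case True
  then obtain n where "k = int n" by (metis nonneg_eq_int)
  then show ?thesis using per2_nat[OF assms] by simp
next
  case False
  then obtain n where k: "k = - int n" by (metis neg_0_le_iff_le nonneg_eq_int le_cases minus_minus)
  have "\<phi> (x, y) = \<phi> (x, (y - real n) + real n)" by simp
  also have "\<dots> = \<phi> (x, y - real n)" by (rule per2_nat[OF assms])
  finally show ?thesis using k by simp
qed

lemma E_add_arg: "E m (s + s') = E m s * E m s'"
  by (simp add: E_def cis_mult algebra_simps)

lemma E_per: "E m (x + 1, y) = E m (x, y)" "E m (x, y + 1) = E m (x, y)"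
proof -
  have "E m (1, 0) = 1" "E m (0, 1) = 1" by (simp_all add: E_def cis_multiple_2pi)
  then show "E m (x + 1, y) = E m (x, y)" "E m (x, y + 1) = E m (x, y)"
    using E_add_arg[of m "(x,y)" "(1,0)"] E_add_arg[of m "(x,y)" "(0,1)"] by simp_all
qed

lemma norm_G_le: "finite P \<Longrightarrow> cmod (G P s) \<le> card P"
proof -
  have "cmod (G P s) \<le> (\<Sum>p\<in>P. cmod (E p s))" unfolding G_def by (rule norm_sum)
  then show ?thesis by simp
qed

lemma norm_KP_le: "finite P \<Longrightarrow> cmod (KP P s) \<le> (card P)^2"
proof -
  assume "finite P"
  then have "cmod (G P s) ^ 2 \<le> (card P)^2" using norm_G_le[of P s] by (simp add: power_mono)
  then show ?thesis unfolding KP_norm norm_of_real by simp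
qed



lemma mem_T2sq: "t \<in> T2sq \<longleftrightarrow> 0 \<le> fst t \<and> fst t \<le> 1 \<and> 0 \<le> snd t \<and> snd t \<le> 1"
  by (cases t) (simp add: T2sq_def cbox_Pair_eq)

lemma pointwise:
  assumes phi: "\<phi> \<in> CT2" and x: "x \<in> T2sq" and t: "t \<in> T2sq"
    and B: "\<And>u. u \<in> T2sq \<Longrightarrow> cmod (\<phi> u) \<le> B"
    and d: "\<And>u v. u \<in> cbox (-1,-1) (2,2) \<Longrightarrow> v \<in> cbox (-1,-1) (2,2) \<Longrightarrow> dist u v < d \<Longrightarrow> dist (\<phi> u) (\<phi> v) < e"
    and dl: "0 < dl" "dl \<le> 1/4" "2 * dl \<le> d"
    and eta: "0 < eta" "\<And>r. far dl r \<Longrightarrow> eta \<le> cmod (cis (2*pi * r) - 1)"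
  shows "cmod (\<phi> x - \<phi> t) * (cmod (G (Sq N) (x - t)))^2
     \<le> e * (cmod (G (Sq N) (x - t)))^2 + (2 * B * (4 / eta^2)) * ((cmod (G (P1 N) (x - t)))^2 + (cmod (G (P2 N) (x - t)))^2)"
proof -
  define g1 where "g1 = (cmod (G (P1 N) (x - t)))^2"
  define g2 where "g2 = (cmod (G (P2 N) (x - t)))^2"
  have Gs: "(cmod (G (Sq N) (x - t)))^2 = g1 * g2"
    by (simp add: g1_def g2_def G_Sq norm_mult power_mult_distrib)
  have g1: "0 \<le> g1" and g2: "0 \<le> g2" by (simp_all add: g1_def g2_def)
  have diffB: "cmod (\<phi> x - \<phi> t) \<le> 2 * B"
    using norm_triangle_ineq4[of "\<phi> x" "\<phi> t"] B[OF x] B[OF t] by simp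
  have B0: "0 \<le> B" using B[OF x] norm_ge_zero order_trans by blast
  have far_g: "g \<le> 4 / eta^2" if "far dl r" "g = (cmod (\<Sum>i<N. cis (2*pi * r) ^ i))^2" for g r
  proof -
    have ne: "eta \<le> cmod (cis (2*pi * r) - 1)" using eta(2) that(1) .
    then have "cis (2*pi * r) \<noteq> 1" using eta(1) by auto
    then have "cmod (\<Sum>i<N. cis (2*pi * r) ^ i) \<le> 2 / cmod (cis (2*pi * r) - 1)"
      by (intro geo_le) auto
    also have "\<dots> \<le> 2 / eta" using ne eta(1) by (intro divide_left_mono) (auto intro!: mult_pos_pos)
    finally have "(cmod (\<Sum>i<N. cis (2*pi * r) ^ i))^2 \<le> (2 / eta)^2"
      by (intro power_mono) auto
    then show ?thesis using that(2) by (simp add: power_divide)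
  qed
  have xin: "0 \<le> fst x" "fst x \<le> 1" "0 \<le> snd x" "snd x \<le> 1"
    using x by (auto simp: mem_T2sq)
  have xb: "x \<in> cbox (-1,-1) (2,2)"
    using xin by (cases x) (auto simp: cbox_Pair_eq cbox_interval)
  have e0: "0 < e" using d[OF xb xb] dl by simp
  define C where "C = 2 * B * (4 / eta^2)"
  have C0: "0 \<le> C" using B0 by (simp add: C_def)
  have key: "cmod (\<phi> x - \<phi> t) * (g1 * g2) \<le> e * (g1 * g2) + C * (g1 + g2)"
  proof (cases "far dl (fst x - fst t)")
    case True
    then have "g1 \<le> 4 / eta^2" by (intro far_g[of "fst x - fst t"]) (simp_all add: g1_def G_P1)
    then have "cmod (\<phi> x - \<phi> t) * (g1 * g2) \<le> (2 * B) * ((4 / eta^2) * g2)"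
      using diffB g1 g2 B0 by (intro mult_mono) (auto intro: mult_right_mono)
    also have "\<dots> = C * g2" by (simp add: C_def)
    also have "\<dots> \<le> e * (g1 * g2) + C * (g1 + g2)"
    proof -
      have "0 \<le> e * (g1 * g2)" "0 \<le> C * g1" "0 \<le> C * g1" "0 \<le> C * g2" using e0 g1 g2 C0 by simp_all
      then show ?thesis by (simp add: distrib_left)
    qed
    finally show ?thesis .
  next
    case nf1: False
    show ?thesis
    proof (cases "far dl (snd x - snd t)")
      case True
      then have "g2 \<le> 4 / eta^2" by (intro far_g[of "snd x - snd t"]) (simp_all add: g2_def G_P2)
      then have "cmod (\<phi> x - \<phi> t) * (g1 * g2) \<le> (2 * B) * ((4 / eta^2) * g1)"
        using diffB g1 g2 B0 by (subst mult.commute[of g1]) (intro mult_mono, auto intro: mult_right_mono)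
      also have "\<dots> = C * g1" by (simp add: C_def)
      also have "\<dots> \<le> e * (g1 * g2) + C * (g1 + g2)"
    proof -
      have "0 \<le> e * (g1 * g2)" "0 \<le> C * g1" "0 \<le> C * g1" "0 \<le> C * g2" using e0 g1 g2 C0 by simp_all
      then show ?thesis by (simp add: distrib_left)
    qed
      finally show ?thesis .
    next
      case nf2: False
      obtain k1 :: int where k1: "\<bar>(fst x - fst t) - of_int k1\<bar> < dl" using not_far[OF nf1] dl by auto
      obtain k2 :: int where k2: "\<bar>(snd x - snd t) - of_int k2\<bar> < dl" using not_far[OF nf2] dl by auto
      define t' where "t' = (fst t + of_int k1, snd t + of_int k2)"
      have "\<phi> t' = \<phi> (fst t, snd t + of_int k2)" unfolding t'_def by (rule per1[OF phi])
      also have "\<dots> = \<phi> t" using per2[OF phi, of "fst t" "snd t" k2] by simp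
      finally have pt: "\<phi> t' = \<phi> t" .
      have tb: "t' \<in> cbox (-1,-1) (2,2)"
        using xin k1 k2 dl by (auto simp: t'_def cbox_Pair_eq cbox_interval abs_less_iff)
      have "dist x t' = sqrt ((fst x - fst t')^2 + (snd x - snd t')^2)"
        by (cases x, cases t') (simp add: dist_Pair_Pair dist_real_def)
      also have "\<dots> \<le> \<bar>fst x - fst t'\<bar> + \<bar>snd x - snd t'\<bar>" by (rule sqrt_sum_squares_le_sum_abs)
      also have "\<dots> < 2 * dl" using k1 k2 by (simp add: t'_def algebra_simps)
      finally have "dist x t' < d" using dl by simp
      then have "dist (\<phi> x) (\<phi> t') < e" using d[OF xb tb] by simp
      then have lt: "cmod (\<phi> x - \<phi> t) \<le> e" using pt by (simp add: dist_norm)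
      have "cmod (\<phi> x - \<phi> t) * (g1 * g2) \<le> e * (g1 * g2)"
        using lt g1 g2 by (intro mult_right_mono) auto
      also have "\<dots> \<le> e * (g1 * g2) + C * (g1 + g2)" using C0 g1 g2 by simp
      finally show ?thesis .
    qed
  qed
  show ?thesis unfolding Gs g1_def[symmetric] g2_def[symmetric] C_def[symmetric] using key .
qed

lemma approx:
  assumes phi: "\<phi> \<in> CT2" and b: "b \<in> Linf_mm"
    and M: "AE t in T2meas. cmod (\<phi> t - b t) \<le> M" and ep: "0 < \<epsilon>"
  shows "\<exists>c\<in>C_L. \<forall>x\<in>T2sq. cmod (\<phi> x - c x) \<le> M + \<epsilon>"
proof -
  have phic: "continuous_on UNIV \<phi>" using phi by (simp add: CT2_def)
  have "bounded (\<phi> ` T2sq)"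
    by (intro compact_imp_bounded compact_continuous_image continuous_on_subset[OF phic])
       (auto simp: T2sq_def)
  then obtain B where B: "\<And>u. u \<in> T2sq \<Longrightarrow> cmod (\<phi> u) \<le> B"
    by (auto simp: bounded_iff)
  have B0: "0 \<le> B" using B[of "(0,0)"] by (simp add: T2sq_def) (meson norm_ge_zero order_trans)
  have "uniformly_continuous_on (cbox (-1,-1) (2,2)) \<phi>"
    by (intro compact_uniformly_continuous continuous_on_subset[OF phic]) auto
  then obtain d where d0: "d > 0" and d: "\<And>u v. u \<in> cbox (-1,-1) (2,2) \<Longrightarrow> v \<in> cbox (-1,-1) (2,2) \<Longrightarrow> dist u v < d \<Longrightarrow> dist (\<phi> u) (\<phi> v) < \<epsilon>/2"
    unfolding uniformly_continuous_on_def using ep by (metis half_gt_zero dist_commute)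
  define dl where "dl = min (1/4) (d/2)"
  have dl: "0 < dl" "dl \<le> 1/4" "2 * dl \<le> d" using d0 by (auto simp: dl_def)
  obtain eta where eta: "0 < eta" "\<And>r. far dl r \<Longrightarrow> eta \<le> cmod (cis (2*pi * r) - 1)"
    using far_bound[of dl] dl by auto
  define C where "C = 2 * B * (4 / eta^2)"
  have C0: "0 \<le> C" using B0 by (simp add: C_def)
  obtain n :: nat where n: "4 * C / \<epsilon> < real n" using reals_Archimedean2 by blast
  define N where "N = Suc n"
  have N0: "0 < real N" by (simp add: N_def)
  have NC: "2 * C / real N \<le> \<epsilon> / 2"
  proof -
    have "4 * C < \<epsilon> * real N" using n ep N_def by (simp add: field_simps)
    then show ?thesis using N0 ep by (simp add: field_simps)
  qed
  have bm: "b \<in> borel_measurable T2meas" and bL: "b \<in> Linf" using b by (auto simp: Linf_mm_def Linf_def)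
  obtain Bb where Bb: "AE t in T2meas. cmod (b t) \<le> Bb" using Linf_bound[OF bL] by blast
  define NN where "NN = complex_of_nat (N * N)"
  have NN0: "NN \<noteq> 0" using N0 by (simp add: NN_def)
  define a where "a p q = integral\<^sup>L T2meas (\<lambda>t. b t * E (q - p) t)" for p q
  define c where "c x = (\<Sum>p\<in>Sq N. \<Sum>q\<in>Sq N. E (p - q) x * a p q) / NN" for x
  have c_conv: "c x = integral\<^sup>L T2meas (\<lambda>t. b t * KP (Sq N) (x - t)) / NN" for x
    unfolding c_def a_def by (subst conv_KP[OF bm Bb]) simp
  have cc: "continuous_on UNIV c" using NN0 unfolding c_def by (intro continuous_intros) auto
  have cm: "c \<in> borel_measurable T2meas" by (rule cont_meas) (rule continuous_on_subset[OF cc], simp)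
  have cCT2: "c \<in> CT2"
    using cc by (simp add: CT2_def c_def E_per)
  define R where "R = (\<Sum>p\<in>Sq N. \<Sum>q\<in>Sq N. cmod (a p q)) / cmod NN"
  have cR: "cmod (c x) \<le> R" for x
  proof -
    have "cmod (\<Sum>p\<in>Sq N. \<Sum>q\<in>Sq N. E (p - q) x * a p q) \<le> (\<Sum>p\<in>Sq N. cmod (\<Sum>q\<in>Sq N. E (p - q) x * a p q))"
      by (rule norm_sum)
    also have "\<dots> \<le> (\<Sum>p\<in>Sq N. \<Sum>q\<in>Sq N. cmod (E (p - q) x * a p q))"
      by (intro sum_mono norm_sum)
    also have "\<dots> = (\<Sum>p\<in>Sq N. \<Sum>q\<in>Sq N. cmod (a p q))" by (simp add: norm_mult)
    finally show ?thesis unfolding c_def R_def norm_divide by (simp add: divide_right_mono)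
  qed
  have cLinf: "c \<in> Linf"
  proof -
    have "Linf_norm c \<le> ereal R"
      unfolding Linf_norm_def using cm cR by (intro esssup_I) auto
    then show ?thesis using cm by (auto simp: Linf_def)
  qed
  have cF: "fourier2 c n1 n2 = 0" if "n1 < 0" "n2 < 0" for n1 n2
  proof -
    have trm: "integral\<^sup>L T2meas (\<lambda>t. E (p - q) t * a p q / NN * E (-n1, -n2) t) = 0" for p q
    proof -
      have "integral\<^sup>L T2meas (\<lambda>t. E (p - q) t * a p q / NN * E (-n1, -n2) t)
          = integral\<^sup>L T2meas (\<lambda>t. a p q / NN * E (p - q + (-n1, -n2)) t)"
        by (simp add: E_add mult_ac)
      also have "\<dots> = a p q / NN * (if p - q + (-n1, -n2) = 0 then 1 else 0)"
        by (simp add: ortho)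
      also have "\<dots> = 0"
      proof (cases "p - q + (-n1, -n2) = 0")
        case True
        then have "q - p = (-n1, -n2)" by (simp add: algebra_simps prod_eq_iff)
        then have "a p q = fourier2 b n1 n2" by (simp add: a_def fourier2_E)
        also have "\<dots> = 0" using b that by (simp add: Linf_mm_def)
        finally show ?thesis by simp
      qed simp
      finally show ?thesis .
    qed
    have "fourier2 c n1 n2 = integral\<^sup>L T2meas (\<lambda>t. \<Sum>p\<in>Sq N. \<Sum>q\<in>Sq N. E (p - q) t * a p q / NN * E (-n1, -n2) t)"
      unfolding fourier2_E c_def by (simp add: sum_distrib_right sum_divide_distrib)
    also have "\<dots> = (\<Sum>p\<in>Sq N. \<Sum>q\<in>Sq N. integral\<^sup>L T2meas (\<lambda>t. E (p - q) t * a p q / NN * E (-n1, -n2) t))"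
      by (simp add: integral_sum integrable_sum cont_integrable continuous_intros)
    also have "\<dots> = 0" by (intro sum.neutral ballI trm)
    finally show ?thesis .
  qed
  have cCL: "c \<in> C_L" using cLinf cF cCT2 by (simp add: C_L_def Linf_mm_def)
  have phim: "\<phi> \<in> borel_measurable T2meas" by (rule cont_meas) (rule continuous_on_subset[OF phic], simp)
  have bound: "cmod (\<phi> x - c x) \<le> M + \<epsilon>" if x: "x \<in> T2sq" for x
  proof -
    define KS where "KS t = KP (Sq N) (x - t)" for t
    define Gs where "Gs t = (cmod (G (Sq N) (x - t)))^2" for t
    define g1 where "g1 t = (cmod (G (P1 N) (x - t)))^2" for t
    define g2 where "g2 t = (cmod (G (P2 N) (x - t)))^2" for t
    define f where "f t = (\<phi> x - b t) * KS t" for t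
    have KSc: "continuous_on T2sq KS" unfolding KS_def by (intro continuous_intros)
    have KSm: "KS \<in> borel_measurable T2meas" by (rule cont_meas[OF KSc])
    have intKS: "integral\<^sup>L T2meas (\<lambda>t. KP (Sq N) (x - t)) = NN"
      unfolding NN_def using int_KP[of "Sq N" x] by simp
    have int_bKS: "integrable T2meas (\<lambda>t. b t * KS t)"
    proof (rule bdd_integrable)
      show "(\<lambda>t. b t * KS t) \<in> borel_measurable T2meas" using bm KSm by measurable
      show "AE t in T2meas. cmod (b t * KS t) \<le> Bb * (card (Sq N))^2"
        using Bb
      proof eventually_elim
        case (elim t)
        have "cmod (KS t) \<le> (card (Sq N))^2" unfolding KS_def by (rule norm_KP_le) simp
        moreover have "0 \<le> Bb" using elim norm_ge_zero order_trans by blast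
        ultimately show ?case unfolding norm_mult using elim by (intro mult_mono) auto
      qed
    qed
    have int_pKS: "integrable T2meas (\<lambda>t. \<phi> x * KS t)"
      by (rule cont_integrable) (intro continuous_intros KSc)
    have fe: "f = (\<lambda>t. \<phi> x * KS t - b t * KS t)" by (rule ext) (simp add: f_def left_diff_distrib)
    have int_f: "integrable T2meas f" unfolding fe using int_pKS int_bKS by simp
    have "integral\<^sup>L T2meas f = \<phi> x * NN - c x * NN"
      unfolding fe using int_pKS int_bKS NN0 by (simp add: intKS c_conv KS_def)
    then have pc: "\<phi> x - c x = integral\<^sup>L T2meas f / NN" using NN0 by (simp add: field_simps)
    have nf: "cmod (f t) = cmod (\<phi> x - b t) * Gs t" for t
      unfolding f_def KS_def Gs_def KP_norm norm_mult norm_of_real by simp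
    have Gsi: "integrable T2meas Gs" unfolding Gs_def by (rule integrable_G2)
    have g1i: "integrable T2meas g1" unfolding g1_def by (rule integrable_G2)
    have g2i: "integrable T2meas g2" unfolding g2_def by (rule integrable_G2)
    have i1: "integrable T2meas (\<lambda>t. cmod (\<phi> x - b t) * Gs t)"
      using integrable_norm[OF int_f] by (simp add: nf)
    have i2: "integrable T2meas (\<lambda>t. (\<epsilon>/2 + M) * Gs t + C * (g1 t + g2 t))"
      using Gsi g1i g2i by simp
    have mono: "integral\<^sup>L T2meas (\<lambda>t. cmod (\<phi> x - b t) * Gs t) \<le> integral\<^sup>L T2meas (\<lambda>t. (\<epsilon>/2 + M) * Gs t + C * (g1 t + g2 t))"
    proof (rule integral_mono_AE[OF i1 i2])
      show "AE t in T2meas. cmod (\<phi> x - b t) * Gs t \<le> (\<epsilon>/2 + M) * Gs t + C * (g1 t + g2 t)"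
        using M AE_space
      proof eventually_elim
        case (elim t)
        then have t: "t \<in> T2sq" by simp
        have pw: "cmod (\<phi> x - \<phi> t) * Gs t \<le> \<epsilon>/2 * Gs t + C * (g1 t + g2 t)"
          unfolding Gs_def g1_def g2_def C_def
          by (rule pointwise[OF phi x t B d dl eta]) auto
        have "cmod (\<phi> x - b t) \<le> cmod (\<phi> x - \<phi> t) + M"
          using norm_triangle_ineq[of "\<phi> x - \<phi> t" "\<phi> t - b t"] elim by simp
        then have "cmod (\<phi> x - b t) * Gs t \<le> (cmod (\<phi> x - \<phi> t) + M) * Gs t"
          by (intro mult_right_mono) (auto simp: Gs_def)
        then show ?case using pw by (simp add: algebra_simps)
      qed
    qed
    have rhs: "integral\<^sup>L T2meas (\<lambda>t. (\<epsilon>/2 + M) * Gs t + C * (g1 t + g2 t)) = (\<epsilon>/2 + M) * (real N * real N) + C * (real N + real N)"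
    proof -
      have "integral\<^sup>L T2meas Gs = real N * real N" unfolding Gs_def using int_G2[of "Sq N" x] by simp
      moreover have "integral\<^sup>L T2meas g1 = real N" unfolding g1_def using int_G2[of "P1 N" x] by simp
      moreover have "integral\<^sup>L T2meas g2 = real N" unfolding g2_def using int_G2[of "P2 N" x] by simp
      ultimately show ?thesis using Gsi g1i g2i by simp
    qed
    have "cmod (\<phi> x - c x) = cmod (integral\<^sup>L T2meas f) / (real N * real N)"
      unfolding pc norm_divide NN_def by (metis norm_of_nat of_nat_mult)
    also have "\<dots> \<le> integral\<^sup>L T2meas (\<lambda>t. cmod (f t)) / (real N * real N)"
      by (intro divide_right_mono integral_norm_bound) auto
    also have "\<dots> \<le> ((\<epsilon>/2 + M) * (real N * real N) + C * (real N + real N)) / (real N * real N)"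
      using mono rhs by (intro divide_right_mono) (auto simp: nf)
    also have "\<dots> = \<epsilon>/2 + M + 2 * C / real N"
      using N0 by (simp add: field_simps)
    also have "\<dots> \<le> M + \<epsilon>" using NC by simp
    finally show ?thesis .
  qed
  show ?thesis using cCL bound by blast
qed

lemma CT2_meas: "c \<in> CT2 \<Longrightarrow> c \<in> borel_measurable T2meas"
  by (rule cont_meas) (auto simp: CT2_def intro: continuous_on_subset)

theorem mainTheorem8:
  fixes \<phi> :: "real \<times> real \<Rightarrow> complex"
  assumes "\<phi> \<in> CT2"
  shows "dist_Linf \<phi> Linf_mm = dist_Linf \<phi> C_L"
proof (rule antisym)
  show "dist_Linf \<phi> Linf_mm \<le> dist_Linf \<phi> C_L"
    unfolding dist_Linf_def by (rule INF_superset_mono) (auto simp: C_L_def)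
  have phim: "\<phi> \<in> borel_measurable T2meas" by (rule CT2_meas[OF assms])
  show "dist_Linf \<phi> C_L \<le> dist_Linf \<phi> Linf_mm"
    unfolding dist_Linf_def
  proof (rule INF_greatest)
    fix b assume b: "b \<in> Linf_mm"
    show "(INF c\<in>C_L. Linf_norm (\<lambda>z. \<phi> z - c z)) \<le> Linf_norm (\<lambda>z. \<phi> z - b z)"
    proof (rule ereal_le_epsilon2)
      fix e :: real assume e: "0 < e"
      define L where "L = Linf_norm (\<lambda>z. \<phi> z - b z)"
      have ae: "AE t in T2meas. ereal (cmod (\<phi> t - b t)) \<le> L"
        unfolding L_def Linf_norm_def by (rule esssup_AE)
      show "(INF c\<in>C_L. Linf_norm (\<lambda>z. \<phi> z - c z)) \<le> Linf_norm (\<lambda>z. \<phi> z - b z) + ereal e"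
      proof (cases L)
        case PInf then show ?thesis by (simp add: L_def)
      next
        case MInf
        then have "AE t in T2meas. False" using ae by simp
        then have "ae_filter T2meas = bot" by (simp add: eventually_False)
        then show ?thesis using emeas_T2 by (simp add: ae_filter_eq_bot_iff)
      next
        case (real M)
        then have aeM: "AE t in T2meas. cmod (\<phi> t - b t) \<le> M" using ae by simp
        obtain c where c: "c \<in> C_L" and cb: "\<And>x. x \<in> T2sq \<Longrightarrow> cmod (\<phi> x - c x) \<le> M + e"
          using approx[OF assms b aeM e] by blast
        have cm: "c \<in> borel_measurable T2meas" using c by (intro CT2_meas) (simp add: C_L_def)
        have "Linf_norm (\<lambda>z. \<phi> z - c z) \<le> ereal (M + e)"
          unfolding Linf_norm_def
        proof (rule esssup_I)
          show "(\<lambda>z. ereal (cmod (\<phi> z - c z))) \<in> borel_measurable T2meas" using phim cm by measurable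
          show "AE z in T2meas. ereal (cmod (\<phi> z - c z)) \<le> ereal (M + e)"
            using AE_space by eventually_elim (use cb in auto)
        qed
        then have "(INF c\<in>C_L. Linf_norm (\<lambda>z. \<phi> z - c z)) \<le> ereal (M + e)"
          using c by (meson INF_lower order_trans)
        then show ?thesis using real by (simp add: L_def)
      qed
    qed
  qed
qed

end
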